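(* For any $q\in(1/2,1)$ and integers $K\ge1$, $1\le C\le K/2$, we have $\lambda^*(q,K,C)>1-\frac{1}{2q}$. Moreover, for any fixed $q\in(1/2,1)$ and any $\overline{\lambda}>1-\frac{1}{2q}$, there exist $\underline{K},\underline{C}$ such that whenever $K\ge\underline{K}$ and $C\ge\underline{C}$ (with $C\le K/2$), we have $\lambda^*(q,K,C)\le\overline{\lambda}$.
   Context: For parameters $q\in(1/2,1)$, integers $K\ge1$, $1\le C\le K/2$, and $\lambda\in[0,1]$, let $P_k(x,\lambda)=\mathbb{P}[\mathrm{Binom}(K,\lambda x+(1-\lambda)q)=k]$ for $x\in[0,1]$, and define the majority-rule inflow accuracy function $$\phi_{\sigma^{\mathrm{maj}}}(x)=\frac{q+C\sum_{k>K/2}P_k(x,\lambda)+qC\,P_{K/2}(x,\lambda)}{1+C},$$ where the $P_{K/2}$ term is present only when $K$ is even. (This is the expected fraction of new popularity score going to correct stories when agents share $C$ stories of their size-$K$ news-feed majority, breaking ties by their own story, and post their own story of precision $q$.) The critical virality weight is $\lambda^*(q,K,C)=\inf\{\lambda\in[0,1]:\phi_{\sigma^{\mathrm{maj}}}(x)=x\text{ for some }x\in[0,1/2]\}$, with $\lambda^*=\infty$ if the set is empty. *)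

theory Defs
  imports "HOL-Analysis.Analysis" "HOL-Library.Extended_Real"
begin

definition binom_pmf :: "nat \<Rightarrow> real \<Rightarrow> nat \<Rightarrow> real" where
  "binom_pmf K p k = real (K choose k) * p ^ k * (1 - p) ^ (K - k)"

definition Pk :: "real \<Rightarrow> nat \<Rightarrow> real \<Rightarrow> nat \<Rightarrow> real \<Rightarrow> real" where
  "Pk q K lam k x = binom_pmf K (lam * x + (1 - lam) * q) k"

definition phi_maj :: "real \<Rightarrow> nat \<Rightarrow> nat \<Rightarrow> real \<Rightarrow> real \<Rightarrow> real" where
  "phi_maj q K C lam x =
     (q + real C * (\<Sum>k\<in>{k. k \<le> K \<and> K < 2 * k}. Pk q K lam k x)
        + (if even K then q * real C * Pk q K lam (K div 2) x else 0))
     / (1 + real C)"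

definition lambda_star :: "real \<Rightarrow> nat \<Rightarrow> nat \<Rightarrow> ereal" where
  "lambda_star q K C =
     (let S = {lam \<in> {0..1}. \<exists>x\<in>{0..1/2}. phi_maj q K C lam x = x}
      in if S = {} then \<infinity> else ereal (Inf S))"

end

theory Submission
  imports Defs
begin

definition sA :: "nat \<Rightarrow> real \<Rightarrow> real" where
  "sA K p = (\<Sum>k\<le>K. if K < 2*k then binom_pmf K p k else 0)"
definition sB :: "nat \<Rightarrow> real \<Rightarrow> real" where
  "sB K p = (\<Sum>k\<le>K. if 2*k < K then binom_pmf K p k else 0)"
definition sT :: "nat \<Rightarrow> real \<Rightarrow> real" where
  "sT K p = (\<Sum>k\<le>K. if 2*k = K then binom_pmf K p k else 0)"

lemma bp_nonneg: "0 \<le> p \<Longrightarrow> p \<le> 1 \<Longrightarrow> 0 \<le> binom_pmf K p k"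
  unfolding binom_pmf_def by simp

lemma sum_one: "(\<Sum>k\<le>K. binom_pmf K p k) = 1"
  using binomial_ring[of p "1-p" K] by (simp add: binom_pmf_def mult.assoc)

lemma ABT: "sA K p + sB K p + sT K p = 1"
proof -
  have "sA K p + sB K p + sT K p = (\<Sum>k\<le>K. binom_pmf K p k)"
    unfolding sA_def sB_def sT_def sum.distrib[symmetric]
    by (rule sum.cong) auto
  then show ?thesis using sum_one by simp
qed

lemma sA_nonneg: "0 \<le> p \<Longrightarrow> p \<le> 1 \<Longrightarrow> 0 \<le> sA K p"
  unfolding sA_def by (intro sum_nonneg) (auto simp: bp_nonneg)
lemma sT_nonneg: "0 \<le> p \<Longrightarrow> p \<le> 1 \<Longrightarrow> 0 \<le> sT K p"
  unfolding sT_def by (intro sum_nonneg) (auto simp: bp_nonneg)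

lemma phi_repr: "phi_maj q K C lam x =
   (q + real C * (sA K (lam*x+(1-lam)*q) + q * sT K (lam*x+(1-lam)*q))) / (1 + real C)"
proof -
  let ?p = "lam*x+(1-lam)*q"
  have 1: "(\<Sum>k\<in>{k. k \<le> K \<and> K < 2 * k}. Pk q K lam k x) = sA K ?p"
  proof -
    have "{k. k \<le> K \<and> K < 2 * k} = {k\<in>{..K}. K < 2*k}" by auto
    then show ?thesis unfolding sA_def Pk_def
      by (simp add: sum.inter_filter[symmetric])
  qed
  have 2: "(if even K then Pk q K lam (K div 2) x else 0) = sT K ?p"
  proof (cases "even K")
    case True
    have "sT K ?p = (\<Sum>k\<le>K. if k = K div 2 then binom_pmf K ?p k else 0)"
      unfolding sT_def using True by (intro sum.cong) auto
    also have "\<dots> = binom_pmf K ?p (K div 2)" by simp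
    finally show ?thesis using True by (simp add: Pk_def)
  next
    case False
    have "sT K ?p = 0" unfolding sT_def using False by (intro sum.neutral) auto
    then show ?thesis using False by simp
  qed
  have 3: "(if even K then q * real C * Pk q K lam (K div 2) x else 0)
        = q * real C * (if even K then Pk q K lam (K div 2) x else 0)" by simp
  show ?thesis unfolding phi_maj_def 3 1 2 by (simp add: algebra_simps)
qed

lemma B_le_A: assumes "1/2 \<le> p" "p \<le> 1" shows "sB K p \<le> sA K p"
proof -
  have "sB K p = (\<Sum>k\<in>{0..K}. if 2*k < K then binom_pmf K p k else 0)"
    unfolding sB_def by (simp add: atLeast0AtMost)
  also have "\<dots> = (\<Sum>k\<in>{0..K}. if 2*(K+0-k) < K then binom_pmf K p (K+0-k) else 0)"
    by (rule sum.atLeastAtMost_rev)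
  also have "\<dots> = (\<Sum>k\<in>{0..K}. if 2*(K-k) < K then binom_pmf K p (K-k) else 0)"
    by (intro sum.cong refl) (simp only: add_0_right)
  also have "\<dots> \<le> (\<Sum>k\<in>{0..K}. if K < 2*k then binom_pmf K p k else 0)"
  proof (rule sum_mono)
    fix k assume k: "k \<in> {0..K}"
    show "(if 2*(K-k) < K then binom_pmf K p (K-k) else 0) \<le> (if K < 2*k then binom_pmf K p k else 0)"
    proof (cases "2*(K-k) < K")
      case True
      define j where "j = K - k"
      define d where "d = k - j"
      have kk: "k = j + d" "K - (K-k) = k" "K - k = j" "K - j = j + d" using True k unfolding j_def d_def by auto
      have "p^j * (1-p)^(j+d) = (p^j*(1-p)^j) * (1-p)^d" by (simp add: power_add)
      also have "\<dots> \<le> (p^j*(1-p)^j) * p^d"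
        using assms by (intro mult_left_mono power_mono) auto
      also have "\<dots> = p^(j+d) * (1-p)^j" by (simp add: power_add)
      finally have "p^j * (1-p)^(j+d) \<le> p^(j+d) * (1-p)^j" .
      moreover have "binom_pmf K p (K-k) = real (K choose k) * (p^j * (1-p)^(j+d))"
        unfolding binom_pmf_def using binomial_symmetric[of k K] k kk
        by (simp add: mult.assoc)
      moreover have "binom_pmf K p k = real (K choose k) * (p^(j+d) * (1-p)^j)"
        unfolding binom_pmf_def using kk by (simp add: mult.assoc)
      ultimately have "binom_pmf K p (K-k) \<le> binom_pmf K p k"
        by (simp add: mult_left_mono)
      then show ?thesis using True k by auto
    next
      case False
      then show ?thesis using assms by (auto simp: bp_nonneg)
    qed
  qed
  also have "\<dots> = sA K p" unfolding sA_def by (simp add: atLeast0AtMost)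
  finally show ?thesis .
qed

lemma tail_bound: assumes "0 \<le> p" "p \<le> 1/2"
  shows "sA K p + sT K p \<le> (2 * sqrt (p*(1-p)))^K"
proof -
  define s where "s = sqrt (p*(1-p))"
  have s0: "0 \<le> s" using assms unfolding s_def by simp
  have s2: "s^2 = p*(1-p)" using assms unfolding s_def by simp
  have ps: "p \<le> s" unfolding s_def using assms
    by (intro real_le_rsqrt) (auto simp: power2_eq_square intro!: mult_left_mono)
  have tm: "p^k * (1-p)^(K-k) \<le> s^K" if "K \<le> 2*k" "k \<le> K" for k
  proof -
    define j where "j = K - k"
    define d where "d = k - j"
    have kk: "k = j + d" "K - k = j" "K = 2*j + d" using that unfolding j_def d_def by auto
    have "p^k * (1-p)^(K-k) = (p*(1-p))^j * p^d" unfolding kk(2) by (subst kk(1)) (simp add: power_add power_mult_distrib)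
    also have "\<dots> \<le> (s^2)^j * s^d" using assms ps unfolding s2
      by (intro mult_left_mono power_mono) auto
    also have "\<dots> = s^K" unfolding kk(3) by (simp add: power_add power_mult)
    finally show ?thesis .
  qed
  have "sA K p + sT K p = (\<Sum>k\<le>K. if K \<le> 2*k then binom_pmf K p k else 0)"
    unfolding sA_def sT_def sum.distrib[symmetric] by (rule sum.cong) auto
  also have "\<dots> \<le> (\<Sum>k\<le>K. real (K choose k) * s^K)"
  proof (rule sum_mono)
    fix k assume k: "k \<in> {..K}"
    show "(if K \<le> 2*k then binom_pmf K p k else 0) \<le> real (K choose k) * s^K"
      using tm[of k] k s0 unfolding binom_pmf_def
      by (auto simp: mult.assoc intro!: mult_left_mono)
  qed
  also have "\<dots> = 2^K * s^K" unfolding sum_distrib_right[symmetric]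
    using choose_row_sum[of K] by (metis of_nat_numeral of_nat_power of_nat_sum)
  also have "\<dots> = (2 * s) ^ K" by (simp add: power_mult_distrib)
  finally show ?thesis unfolding s_def .
qed

lemma phi_cont: "continuous_on UNIV (\<lambda>z::real\<times>real. phi_maj q K C (fst z) (snd z) - snd z)"
  unfolding phi_maj_def Pk_def binom_pmf_def
  by (cases "even K") (simp_all add: continuous_intros)

lemma no_fix:
  assumes q: "1/2 < q" "q < 1" and lam: "0 \<le> lam" "lam \<le> 1" "lam \<le> 1 - 1/(2*q)"
    and x: "0 \<le> x" "x \<le> 1/2"
  shows "x < phi_maj q K C lam x"
proof -
  define p where "p = lam*x + (1-lam)*q"
  have "1/(2*q) \<le> 1 - lam" using lam by simp
  then have "1/(2*q) * q \<le> (1 - lam) * q" using q by (intro mult_right_mono) auto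
  then have "1/2 \<le> (1-lam)*q" using q by simp
  moreover have "0 \<le> lam*x" using lam x by simp
  ultimately have p1: "1/2 \<le> p" unfolding p_def by linarith
  have "lam*x \<le> lam" using lam x by (simp add: mult_left_le)
  moreover have "(1-lam)*q \<le> 1 - lam" using lam q by (simp add: mult_left_le)
  ultimately have p2: "p \<le> 1" unfolding p_def by linarith
  have BA: "sB K p \<le> sA K p" using B_le_A p1 p2 by simp
  have T0: "0 \<le> sT K p" using sT_nonneg p1 p2 by simp
  have M: "1/2 \<le> sA K p + q * sT K p"
  proof -
    have "(1/2) * sT K p \<le> q * sT K p" using T0 q by (intro mult_right_mono) auto
    then show ?thesis using ABT[of K p] BA by linarith
  qed
  have "phi_maj q K C lam x = (q + real C * (sA K p + q * sT K p)) / (1 + real C)"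
    unfolding phi_repr p_def ..
  also have "\<dots> \<ge> (q + real C * (1/2)) / (1 + real C)"
    by (intro divide_right_mono add_left_mono mult_left_mono M) auto
  finally have "(q + real C * (1/2)) / (1 + real C) \<le> phi_maj q K C lam x" .
  moreover have "1/2 < (q + real C * (1/2)) / (1 + real C)" using q
    by (simp add: field_simps)
  ultimately show ?thesis using x by linarith
qed

lemma S_compact: "compact {lam \<in> {0..1}. \<exists>x\<in>{0..1/2}. phi_maj q K C lam x = x}"
proof -
  define f where "f = (\<lambda>z::real\<times>real. phi_maj q K C (fst z) (snd z) - snd z)"
  have cf: "continuous_on UNIV f" unfolding f_def by (rule phi_cont)
  have cl: "closed {z. f z = 0}" by (rule closed_Collect_eq[OF cf]) simp
  have co: "compact (({0..1}\<times>{0..1/2}) \<inter> {z. f z = 0})"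
    by (intro compact_Int_closed compact_Times compact_Icc cl)
  have "compact (fst ` (({0..1}\<times>{0..1/2}) \<inter> {z. f z = 0}))"
    by (intro compact_continuous_image co continuous_intros)
  moreover have "fst ` (({0..1::real}\<times>{0..1/2::real}) \<inter> {z. f z = 0})
      = {lam \<in> {0..1}. \<exists>x\<in>{0..1/2}. phi_maj q K C lam x = x}"
    unfolding f_def by (force simp: image_iff)
  ultimately show ?thesis by simp
qed

lemma part1:
  assumes q: "1/2 < q" "q < 1"
  shows "lambda_star q K C > ereal (1 - 1/(2*q))"
proof -
  define S where "S = {lam \<in> {0..1}. \<exists>x\<in>{0..1/2}. phi_maj q K C lam x = x}"
  show ?thesis
  proof (cases "S = {}")
    case True then show ?thesis unfolding lambda_star_def S_def[symmetric] by simp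
  next
    case False
    have "compact S" unfolding S_def by (rule S_compact)
    then have "Inf S \<in> S" using False
      by (intro closed_contains_Inf compact_imp_closed bounded_imp_bdd_below compact_imp_bounded)
    then obtain x where l: "0 \<le> Inf S" "Inf S \<le> 1" and x: "0 \<le> x" "x \<le> 1/2"
       and fx: "phi_maj q K C (Inf S) x = x" unfolding S_def by auto
    have "\<not> Inf S \<le> 1 - 1/(2*q)"
      using no_fix[OF q l _ x, of K C] fx by auto
    then show ?thesis unfolding lambda_star_def S_def[symmetric] using False by simp
  qed
qed

lemma phi_isCont: "isCont (\<lambda>x. phi_maj q K C lam x - x) x"
  unfolding phi_maj_def Pk_def binom_pmf_def
  by (cases "even K") (simp_all add: continuous_intros)

lemma part2:
  assumes q: "1/2 < q" "q < 1" and lb: "lbar > 1 - 1/(2*q)"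
  shows "\<exists>K0 C0::nat. \<forall>K C::nat. K0 \<le> K \<and> C0 \<le> C \<and> 1 \<le> C \<and> 2 * C \<le> K
                 \<longrightarrow> lambda_star q K C \<le> ereal lbar"
proof -
  define l1 where "l1 = min lbar 1"
  have thr0: "0 < 1 - 1/(2*q)" using q by (simp add: field_simps)
  have thr1: "1 - 1/(2*q) < 1" using q by simp
  have lb0: "0 < lbar" using thr0 lb by linarith
  have l1: "0 < l1" "l1 \<le> 1" "1 - 1/(2*q) < l1" "l1 \<le> lbar"
    using lb0 thr1 lb unfolding l1_def by (auto simp del: diff_less_eq)
  define c0 where "c0 = (1-l1)*q"
  have c00: "0 \<le> c0" using l1 q unfolding c0_def by simp
  have "1 - l1 < 1/(2*q)" using l1 by simp
  then have "(1-l1)*q < 1/(2*q) * q" using q by (intro mult_strict_right_mono) auto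
  then have c01: "c0 < 1/2" unfolding c0_def using q by simp
  define x1 where "x1 = (1/2 - c0)/(2*l1)"
  have x10: "0 < x1" unfolding x1_def using c01 l1 by simp
  have "l1 * q \<le> l1" using l1 q by (simp add: mult_left_le)
  then have "1/2 - c0 \<le> l1" unfolding c0_def using q by (simp add: algebra_simps)
  then have x11: "x1 \<le> 1/2" unfolding x1_def using l1 by (simp add: field_simps)
  define p1 where "p1 = l1*x1 + (1-l1)*q"
  have p1e: "p1 = c0 + (1/2 - c0)/2" unfolding p1_def x1_def c0_def using l1 by (simp add: field_simps)
  have p10: "0 \<le> p1" "p1 < 1/2" using p1e c00 c01 by (simp_all add: field_simps)
  define r where "r = 2 * sqrt (p1*(1-p1))"
  have r0: "0 \<le> r" unfolding r_def using p10 by simp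
  have "p1*(1-p1) < 1/4"
  proof -
    have "0 < (1/2 - p1)^2" using p10 by simp
    then show ?thesis by (simp add: power2_eq_square algebra_simps)
  qed
  then have "sqrt (p1*(1-p1)) < sqrt (1/4)" by (subst real_sqrt_less_iff) simp
  moreover have "sqrt (1/4::real) = 1/2" by (simp add: real_sqrt_divide)
  ultimately have r1: "r < 1" unfolding r_def by simp
  have "(\<lambda>n. r^n) \<longlonglongrightarrow> 0" using r0 r1 by (intro LIMSEQ_power_zero) simp
  then have "eventually (\<lambda>n. r^n < x1/2) sequentially"
    using x10 by (intro order_tendstoD(2)) auto
  then obtain N where N: "\<And>n. N \<le> n \<Longrightarrow> r^n < x1/2" by (auto simp: eventually_sequentially)
  define C0 where "C0 = nat \<lceil>2*q/x1\<rceil>"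
  show ?thesis
  proof (intro exI allI impI)
    fix K C :: nat assume KC: "N \<le> K \<and> C0 \<le> C \<and> 1 \<le> C \<and> 2 * C \<le> K"
    define S where "S = {lam \<in> {0..1}. \<exists>x\<in>{0..1/2}. phi_maj q K C lam x = x}"
    have "2*q/x1 \<le> real C0" unfolding C0_def by linarith
    also have "\<dots> \<le> real C" using KC by simp
    finally have "2*q \<le> real C * x1" using x10 by (simp add: field_simps)
    then have qC: "q / (1 + real C) < x1/2" using x10 by (simp add: field_simps)
    have A0: "0 \<le> sA K p1" "0 \<le> sT K p1" using p10 by (auto intro: sA_nonneg sT_nonneg)
    have AT: "sA K p1 + sT K p1 < x1/2" using tail_bound[of p1 K] p10 N[of K] KC unfolding r_def by simp
    have M: "sA K p1 + q * sT K p1 \<le> sA K p1 + sT K p1" using A0 q by (simp add: mult_left_le_one_le)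
    have "phi_maj q K C l1 x1 = q / (1 + real C) + (real C / (1 + real C)) * (sA K p1 + q * sT K p1)"
      unfolding phi_repr p1_def[symmetric] by (simp add: add_divide_distrib)
    also have "\<dots> \<le> q / (1 + real C) + (sA K p1 + q * sT K p1)"
      using A0 q by (intro add_left_mono mult_left_le_one_le) auto
    finally have f1: "phi_maj q K C l1 x1 - x1 \<le> 0" using qC M AT by linarith
    have pz: "0 \<le> l1*0 + (1-l1)*q" "l1*0 + (1-l1)*q \<le> 1" using l1 q
      by (auto simp: mult_le_one)
    have "0 \<le> (q + real C * (sA K (l1*0 + (1-l1)*q) + q * sT K (l1*0 + (1-l1)*q))) / (1 + real C)"
      using sA_nonneg[OF pz] sT_nonneg[OF pz] q by simp
    then have f0: "0 \<le> phi_maj q K C l1 0 - 0" unfolding phi_repr by simp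
    obtain x where x: "0 \<le> x" "x \<le> x1" "phi_maj q K C l1 x - x = 0"
      using IVT2[of "\<lambda>x. phi_maj q K C l1 x - x" x1 0 0] f1 f0 x10 phi_isCont by auto
    have "l1 \<in> S" unfolding S_def using l1 x x11 by auto
    then have ne: "S \<noteq> {}" by auto
    have "Inf S \<le> l1" using \<open>l1 \<in> S\<close> by (intro cInf_lower) (auto simp: S_def bdd_below_def)
    then show "lambda_star q K C \<le> ereal lbar"
      unfolding lambda_star_def S_def[symmetric] using ne l1 by simp
  qed
qed

theorem proposition5:
  shows "(\<forall>q::real. \<forall>K C::nat. 1/2 < q \<and> q < 1 \<and> 1 \<le> K \<and> 1 \<le> C \<and> 2 * C \<le> K
            \<longrightarrow> lambda_star q K C > ereal (1 - 1 / (2 * q)))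
       \<and> (\<forall>q::real. 1/2 < q \<and> q < 1 \<longrightarrow>
            (\<forall>lbar::real. lbar > 1 - 1 / (2 * q) \<longrightarrow>
              (\<exists>K0 C0::nat. \<forall>K C::nat. K0 \<le> K \<and> C0 \<le> C \<and> 1 \<le> C \<and> 2 * C \<le> K
                 \<longrightarrow> lambda_star q K C \<le> ereal lbar)))"
  using part1 part2 by blast

end
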